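(* Let $\alpha>0$ and let $u:[0,1]\to\mathbb R$ be a measurable function with $u(0)=u(1)=0$ satisfying $u(1-x)+(1-x)^\alpha u\!\left(\tfrac{y}{1-x}\right)=u(y)+(1-y)^\alpha u\!\left(\tfrac{1-x-y}{1-y}\right)$ for all $x,y\in[0,1)$ with $x+y\in[0,1]$. Then $u$ is infinitely differentiable on $(0,1)$. *)

theory Defs
  imports "HOL-Analysis.Analysis"
begin

end

theory Submission
  imports Defs
begin


fun Ck :: "nat \<Rightarrow> real set \<Rightarrow> (real \<Rightarrow> real) \<Rightarrow> bool" where
  "Ck 0 S f = (\<forall>x\<in>S. isCont f x)"
| "Ck (Suc k) S f = ((\<forall>x\<in>S. f field_differentiable (at x)) \<and> Ck k S (deriv f))"

lemma ev_open: "open S \<Longrightarrow> x \<in> S \<Longrightarrow> \<forall>y\<in>S. f y = g y \<Longrightarrow> \<forall>\<^sub>F y in nhds x. f y = g y"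
  using eventually_nhds by blast

lemma fd_cong: "f field_differentiable (at x) \<Longrightarrow> \<forall>\<^sub>F y in nhds x. f y = g y \<Longrightarrow> g field_differentiable (at x)"
  unfolding field_differentiable_def using DERIV_cong_ev by blast

lemma fd_isCont: "f field_differentiable (at x) \<Longrightarrow> isCont f x"
  using field_differentiable_imp_continuous_at by blast

lemma Ck_subset: "T \<subseteq> S \<Longrightarrow> Ck k S f \<Longrightarrow> Ck k T f"
  by (induction k arbitrary: f) auto

lemma Ck_Suc_imp: "Ck (Suc k) S f \<Longrightarrow> Ck k S f"
proof (induction k arbitrary: f)
  case 0 then show ?case using fd_isCont by auto
next
  case (Suc k) then show ?case by auto
qed

lemma Ck_cong: "open S \<Longrightarrow> \<forall>x\<in>S. f x = g x \<Longrightarrow> Ck k S f \<Longrightarrow> Ck k S g"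
proof (induction k arbitrary: f g)
  case 0
  have "isCont g x" if "x \<in> S" for x
  proof -
    have "\<forall>\<^sub>F y in nhds x. f y = g y" using ev_open 0 that by blast
    then show ?thesis using 0 that isCont_cong[of f g x] by simp
  qed
  then show ?case by simp
next
  case (Suc k)
  have ev: "\<And>x. x \<in> S \<Longrightarrow> \<forall>\<^sub>F y in nhds x. f y = g y" using Suc.prems(1,2) ev_open by blast
  have d: "\<forall>x\<in>S. g field_differentiable (at x)"
  proof
    fix x assume x: "x \<in> S"
    have "f field_differentiable (at x)" using Suc.prems(3) x by simp
    then show "g field_differentiable (at x)" using fd_cong ev[OF x] by blast
  qed
  have "\<forall>x\<in>S. deriv f x = deriv g x" using ev deriv_cong_ev by blast
  then have "Ck k S (deriv g)" using Suc.IH[OF Suc.prems(1)] Suc.prems(3) by auto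
  with d show ?case by simp
qed

lemma Ck_local: "(\<And>x. x \<in> S \<Longrightarrow> \<exists>T. open T \<and> x \<in> T \<and> Ck k T f) \<Longrightarrow> Ck k S f"
proof (induction k arbitrary: f)
  case 0
  have "isCont f x" if "x \<in> S" for x
    using 0[OF that] by auto
  then show ?case by simp
next
  case (Suc k)
  have "f field_differentiable (at x)" if "x \<in> S" for x
    using Suc.prems[OF that] by auto
  moreover have "Ck k S (deriv f)"
  proof (rule Suc.IH)
    fix x assume "x \<in> S"
    then obtain T where "open T" "x \<in> T" "Ck (Suc k) T f" using Suc.prems by blast
    then show "\<exists>T. open T \<and> x \<in> T \<and> Ck k T (deriv f)" by auto
  qed
  ultimately show ?case by simp
qed

lemma Ck_const: "Ck k S (\<lambda>x. c)"
proof (induction k arbitrary: c)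
  case 0 then show ?case by simp
next
  case (Suc k)
  have e: "deriv (\<lambda>x. c) = (\<lambda>x. 0)" by (rule ext) simp
  have "Ck k S (deriv (\<lambda>x. c))" unfolding e by (rule Suc.IH)
  moreover have "\<forall>x\<in>S. (\<lambda>x. c) field_differentiable (at x)" by simp
  ultimately show ?case by simp
qed

lemma Ck_id: "Ck k S (\<lambda>x. x)"
proof (cases k)
  case 0 then show ?thesis by simp
next
  case (Suc k)
  have e: "deriv (\<lambda>x. x) = (\<lambda>x. 1)" by (rule ext) simp
  have "Ck k S (deriv (\<lambda>x. x))" unfolding e by (rule Ck_const)
  moreover have "\<forall>x\<in>S. (\<lambda>x. x) field_differentiable (at x)" by simp
  ultimately show ?thesis using Suc by simp
qed

lemma Ck_add: "open S \<Longrightarrow> Ck k S f \<Longrightarrow> Ck k S g \<Longrightarrow> Ck k S (\<lambda>x. f x + g x)"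
proof (induction k arbitrary: f g)
  case 0 then show ?case by simp
next
  case (Suc k)
  have fd: "\<And>x. x \<in> S \<Longrightarrow> f field_differentiable (at x) \<and> g field_differentiable (at x)"
    using Suc.prems by simp
  have d: "\<forall>x\<in>S. (\<lambda>x. f x + g x) field_differentiable (at x)"
    using fd field_differentiable_add by blast
  have e: "\<forall>x\<in>S. deriv f x + deriv g x = deriv (\<lambda>x. f x + g x) x"
    using fd deriv_add by metis
  have "Ck k S (\<lambda>x. deriv f x + deriv g x)"
    using Suc.prems by (intro Suc.IH) simp_all
  then have "Ck k S (deriv (\<lambda>x. f x + g x))" using Ck_cong[OF Suc.prems(1) e] by blast
  with d show ?case by simp
qed

lemma Ck_mult: "open S \<Longrightarrow> Ck k S f \<Longrightarrow> Ck k S g \<Longrightarrow> Ck k S (\<lambda>x. f x * g x)"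
proof (induction k arbitrary: f g)
  case 0 then show ?case by simp
next
  case (Suc k)
  have fd: "\<And>x. x \<in> S \<Longrightarrow> f field_differentiable (at x) \<and> g field_differentiable (at x)"
    using Suc.prems by simp
  have d: "\<forall>x\<in>S. (\<lambda>x. f x * g x) field_differentiable (at x)"
    using fd field_differentiable_mult by blast
  have e: "\<forall>x\<in>S. f x * deriv g x + deriv f x * g x = deriv (\<lambda>x. f x * g x) x"
    using fd deriv_mult by metis
  have "Ck k S f" "Ck k S g" using Suc.prems Ck_Suc_imp by blast+
  moreover have "Ck k S (deriv f)" "Ck k S (deriv g)" using Suc.prems by auto
  ultimately have "Ck k S (\<lambda>x. f x * deriv g x + deriv f x * g x)"
    by (intro Ck_add[OF Suc.prems(1)] Suc.IH[OF Suc.prems(1)])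
  then have "Ck k S (deriv (\<lambda>x. f x * g x))" using Ck_cong[OF Suc.prems(1) e] by blast
  with d show ?case by simp
qed

lemma Ck_compose: "open S \<Longrightarrow> open T \<Longrightarrow> g ` S \<subseteq> T \<Longrightarrow> Ck k T f \<Longrightarrow> Ck k S g \<Longrightarrow> Ck k S (\<lambda>x. f (g x))"
proof (induction k arbitrary: f g)
  case 0
  show ?case unfolding Ck.simps
  proof
    fix x assume "x \<in> S"
    then have "isCont g x" "isCont f (g x)" using 0 by auto
    then show "isCont (\<lambda>x. f (g x)) x" using continuous_at_compose[of x g f] by (simp add: o_def)
  qed
next
  case (Suc k)
  have fg: "\<And>x. x \<in> S \<Longrightarrow> g field_differentiable (at x) \<and> f field_differentiable (at (g x))"
    using Suc.prems by auto
  have d: "\<forall>x\<in>S. (\<lambda>x. f (g x)) field_differentiable (at x)"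
    using fg field_differentiable_compose[of g _ f] by (simp add: o_def)
  have e: "\<forall>x\<in>S. deriv f (g x) * deriv g x = deriv (\<lambda>x. f (g x)) x"
    using fg deriv_chain[of g _ f] by (simp add: o_def)
  have "Ck k S (\<lambda>x. deriv f (g x))"
  proof (rule Suc.IH[where f="deriv f" and g=g])
    show "Ck k T (deriv f)" "Ck k S g" using Suc.prems Ck_Suc_imp[of k S g] by auto
  qed (use Suc.prems in auto)
  moreover have "Ck k S (deriv g)" using Suc.prems by simp
  ultimately have "Ck k S (\<lambda>x. deriv f (g x) * deriv g x)"
    by (rule Ck_mult[OF Suc.prems(1)])
  then have "Ck k S (deriv (\<lambda>x. f (g x)))" using Ck_cong[OF Suc.prems(1) e] by blast
  with d show ?case by simp
qed

lemma Ck_powr: "Ck k {0<..} (\<lambda>x. x powr b)"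
proof (induction k arbitrary: b)
  case 0 then show ?case using has_real_derivative_powr DERIV_isCont by fastforce
next
  case (Suc k)
  have D: "\<And>x. x \<in> {0<..} \<Longrightarrow> ((\<lambda>x. x powr b) has_field_derivative b * x powr (b - 1)) (at x)"
    by (simp add: has_real_derivative_powr)
  then have d: "\<forall>x\<in>{0<..}. (\<lambda>x. x powr b) field_differentiable (at x)"
    using field_differentiable_def by blast
  have e: "\<forall>x\<in>{0<..}. b * x powr (b - 1) = deriv (\<lambda>x. x powr b) x"
    using D DERIV_imp_deriv by metis
  moreover have "Ck k {0<..} (\<lambda>x. b * x powr (b - 1))"
    using Suc.IH[of "b - 1"] Ck_const[of k "{0<..}" b] Ck_mult[of "{0<..}" k "\<lambda>x. b" "\<lambda>x. x powr (b - 1)"] by simp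
  ultimately have "Ck k {0<..} (deriv (\<lambda>x. x powr b))" using Ck_cong[OF _ e] by simp
  with d show ?case by simp
qed

lemma Ck_final: "Ck (Suc k) S f \<Longrightarrow> \<forall>x\<in>S. (deriv ^^ k) f differentiable (at x)"
proof (induction k arbitrary: f)
  case 0 then show ?case by (auto intro: field_differentiable_imp_differentiable)
next
  case (Suc k)
  have "(deriv ^^ Suc k) f = (deriv ^^ k) (deriv f)" by (simp only: funpow_Suc_right o_def)
  then show ?case using Suc by simp
qed




lemma measure_image_le:
  fixes g g' :: "real \<Rightarrow> real"
  assumes T: "T \<in> sets lebesgue" "T \<subseteq> {p..q}"
    and der: "\<And>x. x \<in> {p..q} \<Longrightarrow> (g has_field_derivative g' x) (at x)"
    and cont: "continuous_on {p..q} g'"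
    and inj: "inj_on g {p..q}"
    and bnd: "\<And>x. x \<in> {p..q} \<Longrightarrow> \<bar>g' x\<bar> \<le> L"
  shows "g ` T \<in> lmeasurable \<and> measure lebesgue (g ` T) \<le> L * measure lebesgue T"
proof -
  have Tl: "T \<in> lmeasurable"
    by (rule bounded_set_imp_lmeasurable) (use T bounded_subset bounded_closed_interval in blast)+
  have "(\<lambda>x. \<bar>g' x\<bar>) absolutely_integrable_on {p..q}"
    by (intro absolutely_integrable_continuous_real continuous_intros cont)
  then have ai: "(\<lambda>x. \<bar>g' x\<bar>) absolutely_integrable_on T"
    using set_integrable_subset T by blast
  have cv: "(\<lambda>x. \<bar>g' x\<bar> * 1) absolutely_integrable_on T \<and>
           integral T (\<lambda>x. \<bar>g' x\<bar> * 1) = integral T (\<lambda>x. \<bar>g' x\<bar>)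
     \<longleftrightarrow> (\<lambda>x. 1::real) absolutely_integrable_on (g ` T) \<and> integral (g ` T) (\<lambda>x. 1::real) = integral T (\<lambda>x. \<bar>g' x\<bar>)"
  proof (rule has_absolute_integral_change_of_variables_1'[of T g g' "\<lambda>x. 1" "integral T (\<lambda>x. \<bar>g' x\<bar>)", OF T(1)])
    show "(g has_field_derivative g' x) (at x within T)" if "x \<in> T" for x
      using der that T(2) has_field_derivative_at_within by blast
    show "inj_on g T" using inj inj_on_subset T(2) by blast
  qed
  then have R: "(\<lambda>x. 1::real) absolutely_integrable_on (g ` T)" "integral (g ` T) (\<lambda>x. 1) = integral T (\<lambda>x. \<bar>g' x\<bar>)"
    using ai by auto
  have gl: "g ` T \<in> lmeasurable"
    using R(1) lmeasurable_iff_integrable_on set_lebesgue_integral_eq_integral(1) by blast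
  have "measure lebesgue (g ` T) = integral T (\<lambda>x. \<bar>g' x\<bar>)"
    using lmeasure_integral[OF gl] R(2) by simp
  also have "\<dots> \<le> integral T (\<lambda>x. L * 1)"
  proof (rule integral_le)
    show "(\<lambda>x. \<bar>g' x\<bar>) integrable_on T" using ai set_lebesgue_integral_eq_integral(1) by blast
    show "(\<lambda>x. L * 1) integrable_on T"
      using integrable_on_const[OF Tl] by simp
    show "\<bar>g' x\<bar> \<le> L * 1" if "x \<in> T" for x using bnd that T(2) by auto
  qed
  also have "\<dots> = L * measure lebesgue T"
    using lmeasure_integral[OF Tl] integral_mult_right[of T L "\<lambda>x. 1"] by simp
  finally show ?thesis using gl by simp
qed

lemma aint_bounded:
  fixes h :: "real \<Rightarrow> real"
  assumes "h \<in> borel_measurable borel" "\<And>x. x \<in> {c..d} \<Longrightarrow> \<bar>h x\<bar> \<le> M"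
  shows "h absolutely_integrable_on {c..d}"
proof -
  have hm: "h \<in> borel_measurable lebesgue"
    using measurable_completion[of h lborel borel] assms(1) by simp
  have "integrable lebesgue (\<lambda>x. indicat_real {c..d} x *\<^sub>R h x)"
  proof (rule integrableI_bounded_set_indicator[where B=M])
    show "{c..d} \<in> sets lebesgue" by simp
    show "h \<in> borel_measurable lebesgue" by (rule hm)
    show "emeasure lebesgue {c..d} < \<infinity>"
      using bounded_set_imp_lmeasurable[of "{c..d}"] by (simp add: fmeasurable_def)
    show "AE x\<in>{c..d} in lebesgue. norm (h x) \<le> M" using assms(2) by auto
  qed
  then show ?thesis by (simp add: set_integrable_def)
qed




locale fei =
  fixes v :: "real \<Rightarrow> real" and \<alpha> :: real
  assumes alpha: "\<alpha> > 0"
    and vmeas[measurable]: "v \<in> borel_measurable borel"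
    and veq: "\<And>a s. 0 < a \<Longrightarrow> a \<le> 1 \<Longrightarrow> 0 \<le> s \<Longrightarrow> s \<le> a \<Longrightarrow> s < 1 \<Longrightarrow>
        v a + a powr \<alpha> * v (s / a) = v s + (1 - s) powr \<alpha> * v ((a - s) / (1 - s))"
begin

lemma mob_inv: "(t::real) \<noteq> 1 \<Longrightarrow> a < 1 \<Longrightarrow> (a - (a - t) / (1 - t)) / (1 - (a - t) / (1 - t)) = t"
proof -
  assume t: "t \<noteq> 1" and a: "a < 1"
  have t1: "1 - t \<noteq> 0" using t by simp
  have e1: "a - (a - t) / (1 - t) = t * (1 - a) / (1 - t)" using t1 by (simp add: field_simps)
  have e2: "1 - (a - t) / (1 - t) = (1 - a) / (1 - t)" using t1 by (simp add: field_simps)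
  show ?thesis unfolding e1 e2 using t1 a by simp
qed

lemma mob_mono: "(x::real) < 1 \<Longrightarrow> y < 1 \<Longrightarrow> a < 1 \<Longrightarrow> x \<le> y \<Longrightarrow> (a - y) / (1 - y) \<le> (a - x) / (1 - x)"
proof -
  assume h: "x < 1" "y < 1" "a < 1" "x \<le> y"
  have "(a - y) * (1 - x) \<le> (a - x) * (1 - y)"
  proof -
    have "(a - x) * (1 - y) - (a - y) * (1 - x) = (1 - a) * (y - x)" by algebra
    moreover have "(1 - a) * (y - x) \<ge> 0" using h by simp
    ultimately show ?thesis by linarith
  qed
  then show ?thesis using h by (simp add: divide_simps)
qed

lemma local_bound:
  assumes p: "0 < p" and q: "q < 1"
  shows "\<exists>M. \<forall>x\<in>{p..q}. \<bar>v x\<bar> \<le> M"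
proof (cases "p \<le> q")
  case False then show ?thesis by auto
next
  case True
  define L where "L = 1 / (1 - q)"
  have L: "L \<ge> 1" using q p True unfolding L_def by (simp add: divide_simps)
  define \<eta> where "\<eta> = p / (8 * (2 + L))"
  have \<eta>: "\<eta> > 0" using p L unfolding \<eta>_def by simp
  define D where "D n = {x\<in>{0..1}. real n < \<bar>v x\<bar>}" for n :: nat
  have Db: "D n \<in> sets borel" for n unfolding D_def by measurable
  then have Dl: "D n \<in> sets lebesgue" for n by simp
  have Dsub: "D n \<subseteq> {0..1}" for n unfolding D_def by auto
  have Dlm: "D n \<in> lmeasurable" for n
    using bounded_set_imp_lmeasurable[OF bounded_subset[OF bounded_closed_interval Dsub] Dl] .
  have lim: "(\<lambda>n. measure lebesgue (D n)) \<longlonglongrightarrow> measure lebesgue (\<Inter>(range D))"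
  proof (rule Lim_measure_decseq)
    show "range D \<subseteq> sets lebesgue" using Dl by auto
    show "antimono_on UNIV D" by (rule monotone_onI) (auto simp: D_def)
    show "emeasure lebesgue (D n) \<noteq> \<infinity>" for n using fmeasurableD2[OF Dlm[of n]] by (metis infinity_ennreal_def)
  qed
  have "\<Inter>(range D) = {}"
  proof safe
    fix x assume "x \<in> \<Inter>(range D)"
    then have "x \<in> D (nat \<lceil>\<bar>v x\<bar>\<rceil>)" by blast
    then have "real (nat \<lceil>\<bar>v x\<bar>\<rceil>) < \<bar>v x\<bar>" unfolding D_def by simp
    moreover have "\<bar>v x\<bar> \<le> real (nat \<lceil>\<bar>v x\<bar>\<rceil>)"
      by (rule real_nat_ceiling_ge)
    ultimately show "x \<in> {}" by linarith
  qed
  with lim have "(\<lambda>n. measure lebesgue (D n)) \<longlonglongrightarrow> 0" by simp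
  then have "eventually (\<lambda>n. measure lebesgue (D n) < \<eta>) sequentially"
    using order_tendstoD(2) \<eta> by blast
  then obtain N where "\<forall>n\<ge>N. measure lebesgue (D n) < \<eta>" unfolding eventually_sequentially by blast
  then obtain n where mD: "measure lebesgue (D n) < \<eta>" by blast
  show ?thesis
  proof (intro exI ballI)
    fix a assume a: "a \<in> {p..q}"
    define c where "c = p / 4"
    define d where "d = p / 2"
    define g where "g s = (a - s) / (1 - s)" for s
    have a1: "0 < a" "a < 1" using a p q by auto
    define B1 where "B1 = D n \<inter> {c..d}"
    define B2 where "B2 = (\<lambda>t. a * t) ` D n"
    define B3 where "B3 = g ` (D n \<inter> {0..a})"
    have mB1: "measure lebesgue B1 \<le> measure lebesgue (D n)" "B1 \<in> lmeasurable"
      unfolding B1_def using Dl Dlm by (auto intro!: measure_mono_fmeasurable)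
    have "B2 \<in> lmeasurable \<and> measure lebesgue B2 \<le> a * measure lebesgue (D n)"
      unfolding B2_def
    proof (rule measure_image_le[where g' = "\<lambda>x. a"])
      show "D n \<in> sets lebesgue" "D n \<subseteq> {0..1}" using Dl Dsub by auto
      show "((\<lambda>t. a * t) has_field_derivative a) (at x)" for x
        by (auto intro!: derivative_eq_intros)
      show "continuous_on {0..1} (\<lambda>x. a)" by simp
      show "inj_on (\<lambda>t. a * t) {0..1}" using a1 by (auto simp: inj_on_def)
      show "\<bar>a\<bar> \<le> a" using a1 by simp
    qed
    then have mB2: "measure lebesgue B2 \<le> measure lebesgue (D n)" "B2 \<in> lmeasurable"
      using a1 mult_left_le_one_le[of "measure lebesgue (D n)" a] by auto
    have "B3 \<in> lmeasurable \<and> measure lebesgue B3 \<le> L * measure lebesgue (D n \<inter> {0..a})"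
      unfolding B3_def
    proof (rule measure_image_le[where g' = "\<lambda>t. (a - 1) / (1 - t)^2"])
      show "D n \<inter> {0..a} \<in> sets lebesgue" "D n \<inter> {0..a} \<subseteq> {0..a}" using Dl by auto
      show "(g has_field_derivative (a - 1) / (1 - x)^2) (at x)" if "x \<in> {0..a}" for x
      proof -
        have "x \<noteq> 1" using that a1 by auto
        have "((\<lambda>s. (a - s) / (1 - s)) has_field_derivative ((0 - 1) * (1 - x) - (a - x) * (0 - 1)) / ((1 - x) * (1 - x))) (at x)"
          by (intro DERIV_divide DERIV_diff DERIV_const DERIV_ident) (use \<open>x \<noteq> 1\<close> in simp)
        moreover have "(0 - 1) * (1 - x) - (a - x) * (0 - 1) = a - 1" by algebra
        ultimately show ?thesis unfolding g_def by (simp add: power2_eq_square)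
      qed
      show "continuous_on {0..a} (\<lambda>t. (a - 1) / (1 - t)^2)"
        using a1 by (intro continuous_intros) auto
      show "inj_on g {0..a}"
      proof (rule inj_onI)
        fix x y assume "x \<in> {0..a}" "y \<in> {0..a}" "g x = g y"
        then have "(a - g x) / (1 - g x) = (a - g y) / (1 - g y)" by simp
        then show "x = y" using mob_inv[of x a] mob_inv[of y a] a1 \<open>x \<in> {0..a}\<close> \<open>y \<in> {0..a}\<close>
          unfolding g_def by auto
      qed
      show "\<bar>(a - 1) / (1 - x)^2\<bar> \<le> L" if "x \<in> {0..a}" for x
      proof -
        have x: "0 \<le> x" "x \<le> a" using that by auto
        have "(1 - a)^2 \<le> (1 - x)^2" using x a1 by (intro power_mono) auto
        have "\<bar>(a - 1) / (1 - x)^2\<bar> = (1 - a) / (1 - x)^2" using a1 x by (simp add: abs_div)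
        also have "\<dots> \<le> (1 - a) / (1 - a)^2"
          using \<open>(1 - a)^2 \<le> (1 - x)^2\<close> a1 x by (intro divide_left_mono mult_pos_pos) auto
        also have "\<dots> = 1 / (1 - a)" using a1 by (simp add: power2_eq_square)
        also have "\<dots> \<le> L" unfolding L_def using a q a1 by (intro divide_left_mono) auto
        finally show ?thesis .
      qed
    qed
    moreover have "measure lebesgue (D n \<inter> {0..a}) \<le> measure lebesgue (D n)"
      using Dl Dlm by (intro measure_mono_fmeasurable) auto
    ultimately have mB3: "measure lebesgue B3 \<le> L * measure lebesgue (D n)" "B3 \<in> lmeasurable"
      using L by (auto intro: order.trans mult_left_mono)
    have "\<exists>s\<in>{c..d}. \<bar>v s\<bar> \<le> n \<and> \<bar>v (s / a)\<bar> \<le> n \<and> \<bar>v (g s)\<bar> \<le> n"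
    proof (rule ccontr)
      assume nex: "\<not> ?thesis"
      have "{c..d} \<subseteq> B1 \<union> B2 \<union> B3"
      proof
        fix s assume s: "s \<in> {c..d}"
        have s0: "0 < s" "s < a" using s p a unfolding c_def d_def by auto
        show "s \<in> B1 \<union> B2 \<union> B3"
        proof (cases "\<bar>v s\<bar> \<le> n")
          case False
          then have "s \<in> B1" unfolding B1_def D_def using s s0 a1 by auto
          then show ?thesis by blast
        next
          case T1: True
          show ?thesis
          proof (cases "\<bar>v (s / a)\<bar> \<le> n")
            case False
            have "s / a \<in> D n" unfolding D_def using False s0 a1 by auto
            moreover have "s = a * (s / a)" using a1 by simp
            ultimately have "s \<in> B2" unfolding B2_def by blast
            then show ?thesis by blast
          next
            case True
            then have "\<not> \<bar>v (g s)\<bar> \<le> n" using nex T1 s by auto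
            moreover have "0 \<le> g s" "g s \<le> a"
            proof -
              have "a * (1 - s) - (a - s) = s * (1 - a)" by algebra
              moreover have "s * (1 - a) \<ge> 0" using s0 a1 by simp
              ultimately have "a - s \<le> a * (1 - s)" by linarith
              then show "g s \<le> a" unfolding g_def using s0 a1 by (simp add: pos_divide_le_eq)
              show "0 \<le> g s" unfolding g_def using s0 a1 by simp
            qed
            ultimately have "g s \<in> D n \<inter> {0..a}" unfolding D_def using a1 by auto
            moreover have "s = g (g s)" using mob_inv[of s a] s0 a1 unfolding g_def by simp
            ultimately have "s \<in> B3" unfolding B3_def by blast
            then show ?thesis by blast
          qed
        qed
      qed
      then have "measure lebesgue {c..d} \<le> measure lebesgue (B1 \<union> B2 \<union> B3)"
        using mB1 mB2 mB3 by (intro measure_mono_fmeasurable fmeasurable.Un) auto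
      also have "\<dots> \<le> measure lebesgue (B1 \<union> B2) + measure lebesgue B3"
        using mB1 mB2 mB3 by (intro measure_Un_le) auto
      also have "\<dots> \<le> measure lebesgue B1 + measure lebesgue B2 + measure lebesgue B3"
        using mB1 mB2 measure_Un_le[of B1 lebesgue B2] by auto
      also have "\<dots> \<le> (2 + L) * measure lebesgue (D n)"
        using mB1 mB2 mB3 by (simp add: algebra_simps)
      also have "\<dots> < (2 + L) * \<eta>" using mD L by simp
      also have "\<dots> = p / 8" unfolding \<eta>_def using L by (simp add: field_simps)
      finally have "measure lebesgue {c..d} < p / 8" .
      moreover have "measure lebesgue {c..d} = p / 4" unfolding c_def d_def using p by simp
      ultimately show False using p by simp
    qed
    then obtain s where s: "s \<in> {c..d}" "\<bar>v s\<bar> \<le> n" "\<bar>v (s / a)\<bar> \<le> n" "\<bar>v (g s)\<bar> \<le> n" by blast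
    have s0: "0 < s" "s < a" using s p a unfolding c_def d_def by auto
    have e: "v a = v s + (1 - s) powr \<alpha> * v (g s) - a powr \<alpha> * v (s / a)"
      using veq[of a s] s0 a1 unfolding g_def by simp
    have p1: "0 \<le> (1 - s) powr \<alpha>" "(1 - s) powr \<alpha> \<le> 1" using s0 a1 alpha by (auto intro: powr_le1)
    have p2: "0 \<le> a powr \<alpha>" "a powr \<alpha> \<le> 1" using a1 alpha by (auto intro: powr_le1)
    have "\<bar>(1 - s) powr \<alpha> * v (g s)\<bar> = (1 - s) powr \<alpha> * \<bar>v (g s)\<bar>" using p1 by (simp add: abs_mult)
    moreover have "(1 - s) powr \<alpha> * \<bar>v (g s)\<bar> \<le> \<bar>v (g s)\<bar>" using p1 by (intro mult_left_le_one_le) auto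
    ultimately have "\<bar>(1 - s) powr \<alpha> * v (g s)\<bar> \<le> n" using s(4) by linarith
    moreover have "\<bar>a powr \<alpha> * v (s / a)\<bar> \<le> n"
    proof -
      have "\<bar>a powr \<alpha> * v (s / a)\<bar> = a powr \<alpha> * \<bar>v (s / a)\<bar>" using p2 by (simp add: abs_mult)
      moreover have "a powr \<alpha> * \<bar>v (s / a)\<bar> \<le> \<bar>v (s / a)\<bar>" using p2 by (intro mult_left_le_one_le) auto
      ultimately show ?thesis using s(3) by linarith
    qed
    ultimately show "\<bar>v a\<bar> \<le> 3 * real n" using e s(2) by linarith
  qed
qed

end



lemma powr_alg:
  fixes A B \<alpha> :: real
  assumes A: "A > 0" and B: "B > 0"
  shows "A / B^2 * (A / B) powr \<alpha> = A powr (\<alpha> + 1) * B powr (- \<alpha> - 2)"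
proof -
  have e1: "A powr (\<alpha> + 1) = A powr \<alpha> * A" using A by (simp add: powr_add)
  have e2: "B powr (- \<alpha> - 2) = 1 / (B powr \<alpha> * B^2)"
  proof -
    have "- \<alpha> - 2 = - (\<alpha> + 2)" by simp
    then have "B powr (- \<alpha> - 2) = B powr (- (\<alpha> + 2))" by (simp only:)
    also have "\<dots> = 1 / B powr (\<alpha> + 2)" by (rule powr_minus_divide)
    also have "B powr (\<alpha> + 2) = B powr \<alpha> * B powr 2" by (simp add: powr_add)
    also have "B powr 2 = B^2" using B powr_numeral[of B "Num.Bit0 Num.One"] by simp
    finally show ?thesis .
  qed
  have e3: "(A / B) powr \<alpha> = A powr \<alpha> / B powr \<alpha>" using A B by (simp add: powr_divide)
  show ?thesis unfolding e1 e2 e3 using A B by (simp add: field_simps)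
qed

context fei begin

definition w where "w t = v t * (1 - t) powr (- \<alpha> - 2)"

lemma w_meas[measurable]: "w \<in> borel_measurable borel"
  unfolding w_def[abs_def] by measurable

lemma v_aint: "0 < p \<Longrightarrow> q < 1 \<Longrightarrow> v absolutely_integrable_on {p..q}"
  using local_bound[of p q] aint_bounded[OF vmeas] by blast

lemma w_aint:
  assumes "0 < p" "q < 1" shows "w absolutely_integrable_on {p..q}"
proof -
  obtain M where M: "\<forall>x\<in>{p..q}. \<bar>v x\<bar> \<le> M" using local_bound assms by blast
  show ?thesis
  proof (rule aint_bounded[OF w_meas, where M = "M * (1 - q) powr (- \<alpha> - 2)"])
    fix x assume x: "x \<in> {p..q}"
    have "(1 - x) powr (- \<alpha> - 2) \<le> (1 - q) powr (- \<alpha> - 2)"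
      using x assms alpha by (intro powr_mono2') auto
    moreover have "\<bar>w x\<bar> = \<bar>v x\<bar> * (1 - x) powr (- \<alpha> - 2)" unfolding w_def by (simp add: abs_mult)
    moreover have "\<bar>v x\<bar> \<le> M" using M x by auto
    ultimately show "\<bar>w x\<bar> \<le> M * (1 - q) powr (- \<alpha> - 2)"
      by (simp add: mult_mono order.trans[OF abs_ge_zero])
  qed
qed

lemma rep:
  assumes a0: "0 < a0" "a0 < 1" and a: "3 * a0 / 4 < a" "a < 1"
    and cde: "c = a0 / 4" "d = a0 / 2" "e = a0 / 8"
  shows "(d - c) * v a = integral {c..d} v
      + (1 - a) powr (\<alpha> + 1) * (integral {e..(a - c) / (1 - c)} w - integral {e..(a - d) / (1 - d)} w)
      - a powr \<alpha> * (a * (integral {e..d / a} v - integral {e..c / a} v))"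
proof -
  define g where "g s = (a - s) / (1 - s)" for s
  define F2 where "F2 s = (1 - s) powr \<alpha> * v (g s)" for s
  define F3 where "F3 s = v (s / a)" for s
  have pos: "0 < e" "e < c" "c < d" "d < a" "0 < a" "d < 1" "c < 1" using a0 a cde by auto
  have ginv: "g (g t) = t" if "t < 1" for t using mob_inv[of t a] that a unfolding g_def by auto
  have gmono: "g y \<le> g x" if "x < 1" "y < 1" "x \<le> y" for x y
    using mob_mono[of x y a] that a unfolding g_def by auto
  have gca: "g c \<le> a"
  proof -
    have "a * (1 - c) - (a - c) = c * (1 - a)" by algebra
    moreover have "c * (1 - a) \<ge> 0" using pos a by simp
    ultimately have "a - c \<le> a * (1 - c)" by linarith
    then show ?thesis unfolding g_def using pos by (simp add: pos_divide_le_eq)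
  qed
  have gde: "e < g d"
  proof -
    have "a - d \<le> (a - d) / (1 - d)" using pos by (simp add: le_divide_eq mult_left_le_one_le)
    moreover have "a - d > e" using a cde a0 by simp
    ultimately show ?thesis unfolding g_def by linarith
  qed
  have gc1: "g c < 1" using gca a by simp
  have gdc: "g d \<le> g c" using gmono[of c d] pos by simp
  have pw: "v a = v s + F2 s - a powr \<alpha> * F3 s" if "s \<in> {c..d}" for s
    using veq[of a s] that pos a unfolding F2_def F3_def g_def by auto
  have I1: "v integrable_on {c..d}" using v_aint[of c d] pos set_lebesgue_integral_eq_integral(1) by auto
  have F2m: "F2 \<in> borel_measurable borel" unfolding F2_def[abs_def] g_def by measurable
  have F3m: "F3 \<in> borel_measurable borel" unfolding F3_def[abs_def] by measurable
  have A2: "F2 absolutely_integrable_on {c..d}"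
  proof -
    obtain M where M: "\<forall>x\<in>{g d..a}. \<bar>v x\<bar> \<le> M" using local_bound[of "g d" a] gde pos a by auto
    show ?thesis
    proof (rule aint_bounded[OF F2m, where M = M])
      fix s assume s: "s \<in> {c..d}"
      have "g d \<le> g s" "g s \<le> g c" using gmono[of s d] gmono[of c s] s pos by auto
      then have "\<bar>v (g s)\<bar> \<le> M" using M gca by auto
      moreover have "0 \<le> (1 - s) powr \<alpha>" "(1 - s) powr \<alpha> \<le> 1" using s pos alpha by (auto intro: powr_le1)
      moreover have "(1 - s) powr \<alpha> * \<bar>v (g s)\<bar> \<le> \<bar>v (g s)\<bar>"
        using \<open>0 \<le> (1 - s) powr \<alpha>\<close> \<open>(1 - s) powr \<alpha> \<le> 1\<close> by (intro mult_left_le_one_le) auto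
      ultimately have "(1 - s) powr \<alpha> * \<bar>v (g s)\<bar> \<le> M" by linarith
      then show "\<bar>F2 s\<bar> \<le> M" unfolding F2_def using \<open>0 \<le> (1 - s) powr \<alpha>\<close> by (simp add: abs_mult)
    qed
  qed
  have A3: "F3 absolutely_integrable_on {c..d}"
  proof -
    obtain M where M: "\<forall>x\<in>{c/a..d/a}. \<bar>v x\<bar> \<le> M" using local_bound[of "c/a" "d/a"] pos by auto
    show ?thesis
    proof (rule aint_bounded[OF F3m, where M = M])
      fix s assume s: "s \<in> {c..d}"
      then have "s / a \<in> {c/a..d/a}" using pos by (auto simp: divide_right_mono)
      then show "\<bar>F3 s\<bar> \<le> M" using M unfolding F3_def by auto
    qed
  qed
  have cv3: "(\<lambda>t. \<bar>a\<bar> * F3 (a * t)) absolutely_integrable_on {c/a..d/a} \<and>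
           integral {c/a..d/a} (\<lambda>t. \<bar>a\<bar> * F3 (a * t)) = integral {c..d} F3
     \<longleftrightarrow> F3 absolutely_integrable_on ((\<lambda>t. a * t) ` {c/a..d/a}) \<and> integral ((\<lambda>t. a * t) ` {c/a..d/a}) F3 = integral {c..d} F3"
    by (rule has_absolute_integral_change_of_variables_1'[of "{c/a..d/a}" "\<lambda>t. a * t" "\<lambda>t. a" F3 "integral {c..d} F3"])
       (use pos in \<open>auto simp: inj_on_def\<close>)
  have im3: "(\<lambda>t. a * t) ` {c/a..d/a} = {c..d}" using image_mult_atLeastAtMost[of a "c/a" "d/a"] pos by simp
  have "integral {c/a..d/a} (\<lambda>t. \<bar>a\<bar> * F3 (a * t)) = integral {c..d} F3"
    using cv3 A3 im3 by simp
  moreover have "integral {c/a..d/a} (\<lambda>t. \<bar>a\<bar> * F3 (a * t)) = a * integral {c/a..d/a} v"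
    unfolding F3_def using pos by (simp add: integral_mult_right)
  ultimately have J3: "integral {c..d} F3 = a * integral {c/a..d/a} v" by simp
  have cv2: "(\<lambda>t. \<bar>(a - 1) / (1 - t)^2\<bar> * F2 (g t)) absolutely_integrable_on {g d..g c} \<and>
           integral {g d..g c} (\<lambda>t. \<bar>(a - 1) / (1 - t)^2\<bar> * F2 (g t)) = integral {c..d} F2
     \<longleftrightarrow> F2 absolutely_integrable_on (g ` {g d..g c}) \<and> integral (g ` {g d..g c}) F2 = integral {c..d} F2"
  proof (rule has_absolute_integral_change_of_variables_1'[of "{g d..g c}" g "\<lambda>t. (a - 1) / (1 - t)^2" F2 "integral {c..d} F2"])
    show "{g d..g c} \<in> sets lebesgue" by simp
    show "(g has_field_derivative (a - 1) / (1 - x)^2) (at x within {g d..g c})" if "x \<in> {g d..g c}" for x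
    proof -
      have "x \<noteq> 1" using that gc1 by auto
      have "((\<lambda>s. (a - s) / (1 - s)) has_field_derivative ((0 - 1) * (1 - x) - (a - x) * (0 - 1)) / ((1 - x) * (1 - x))) (at x)"
        by (intro DERIV_divide DERIV_diff DERIV_const DERIV_ident) (use \<open>x \<noteq> 1\<close> in simp)
      moreover have "(0 - 1) * (1 - x) - (a - x) * (0 - 1) = a - 1" by algebra
      ultimately have "(g has_field_derivative (a - 1) / (1 - x)^2) (at x)"
        unfolding g_def[abs_def] by (simp add: power2_eq_square)
      then show ?thesis by (rule has_field_derivative_at_within)
    qed
    show "inj_on g {g d..g c}"
    proof (rule inj_onI)
      fix x y assume xy: "x \<in> {g d..g c}" "y \<in> {g d..g c}" "g x = g y"
      then have "x < 1" "y < 1" using gc1 by auto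
      have "x = g (g x)" using ginv[OF \<open>x < 1\<close>] by simp
      also have "\<dots> = g (g y)" using xy(3) by simp
      also have "\<dots> = y" using ginv[OF \<open>y < 1\<close>] by simp
      finally show "x = y" .
    qed
  qed
  have im2: "g ` {g d..g c} = {c..d}"
  proof
    show "g ` {g d..g c} \<subseteq> {c..d}"
    proof
      fix s assume "s \<in> g ` {g d..g c}"
      then obtain t where t: "t \<in> {g d..g c}" "s = g t" by blast
      have "g (g c) \<le> g t" "g t \<le> g (g d)" using gmono[of t "g c"] gmono[of "g d" t] t gc1 gdc by auto
      then show "s \<in> {c..d}" using t ginv[of c] ginv[of d] pos by auto
    qed
    show "{c..d} \<subseteq> g ` {g d..g c}"
    proof
      fix s assume s: "s \<in> {c..d}"
      have "g s \<in> {g d..g c}" using gmono[of s d] gmono[of c s] s pos by auto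
      moreover have "s = g (g s)" using ginv[of s] s pos by auto
      ultimately show "s \<in> g ` {g d..g c}" by blast
    qed
  qed
  have "integral {g d..g c} (\<lambda>t. \<bar>(a - 1) / (1 - t)^2\<bar> * F2 (g t)) = integral {c..d} F2"
    using cv2 A2 unfolding im2 by blast
  moreover have "integral {g d..g c} (\<lambda>t. \<bar>(a - 1) / (1 - t)^2\<bar> * F2 (g t))
      = integral {g d..g c} (\<lambda>t. (1 - a) powr (\<alpha> + 1) * w t)"
  proof (rule integral_cong)
    fix t assume t: "t \<in> {g d..g c}"
    then have t1: "t < 1" using gc1 by auto
    have "1 - t \<noteq> 0" using t1 by simp
    then have "1 - (a - t) / (1 - t) = (1 - a) / (1 - t)" by (simp add: field_simps)
    then have gt: "1 - g t = (1 - a) / (1 - t)" unfolding g_def .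
    have F: "F2 (g t) = ((1 - a) / (1 - t)) powr \<alpha> * v t"
      unfolding F2_def gt ginv[OF t1] ..
    have ab: "\<bar>(a - 1) / (1 - t)^2\<bar> = (1 - a) / (1 - t)^2"
    proof -
      have "(1 - t)^2 > 0" using t1 by simp
      moreover have "a - 1 < 0" using a by simp
      ultimately show ?thesis by (simp add: abs_div)
    qed
    have E: "(1 - a) / (1 - t)^2 * ((1 - a) / (1 - t)) powr \<alpha> = (1 - a) powr (\<alpha> + 1) * (1 - t) powr (- \<alpha> - 2)"
      using powr_alg[of "1 - a" "1 - t" \<alpha>] a t1 by simp
    have "\<bar>(a - 1) / (1 - t)^2\<bar> * F2 (g t) = ((1 - a) / (1 - t)^2 * ((1 - a) / (1 - t)) powr \<alpha>) * v t"
      unfolding ab F by (simp only: mult.assoc)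
    also have "\<dots> = (1 - a) powr (\<alpha> + 1) * w t"
      unfolding E w_def by (simp only: mult.assoc mult.commute mult.left_commute)
    finally show "\<bar>(a - 1) / (1 - t)^2\<bar> * F2 (g t) = (1 - a) powr (\<alpha> + 1) * w t" .
  qed
  ultimately have J2: "integral {c..d} F2 = (1 - a) powr (\<alpha> + 1) * integral {g d..g c} w"
    using integral_mult_right[of "{g d..g c}" "(1 - a) powr (\<alpha> + 1)" w] by simp
  have "((\<lambda>s. v a) has_integral (d - c) * v a) {c..d}"
    using has_integral_const_real[of "v a" c d] pos by simp
  moreover have "((\<lambda>s. v a) has_integral integral {c..d} v + integral {c..d} F2 - a powr \<alpha> * integral {c..d} F3) {c..d}"
  proof -
    have "((\<lambda>s. v s + F2 s - a powr \<alpha> * F3 s) has_integral integral {c..d} v + integral {c..d} F2 - a powr \<alpha> * integral {c..d} F3) {c..d}"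
      using I1 A2 A3 set_lebesgue_integral_eq_integral(1)
      by (intro has_integral_diff has_integral_add has_integral_mult_right integrable_integral) auto
    then show ?thesis using pw has_integral_cong[of "{c..d}" "\<lambda>s. v a" "\<lambda>s. v s + F2 s - a powr \<alpha> * F3 s"] by simp
  qed
  ultimately have main: "(d - c) * v a = integral {c..d} v + integral {c..d} F2 - a powr \<alpha> * integral {c..d} F3"
    using has_integral_unique by blast
  have "integral {e..c/a} v + integral {c/a..d/a} v = integral {e..d/a} v"
  proof (rule Henstock_Kurzweil_Integration.integral_combine)
    show "e \<le> c / a"
    proof -
      have "e * a \<le> e" using pos a by (intro mult_right_le_one_le) auto
      then have "e * a \<le> c" using pos by linarith
      then show ?thesis using pos by (simp add: le_divide_eq)
    qed
    show "c / a \<le> d / a" using pos by (simp add: divide_right_mono)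
    show "v integrable_on {e..d/a}" using v_aint[of e "d/a"] pos set_lebesgue_integral_eq_integral(1) by simp
  qed
  then have S3: "integral {c/a..d/a} v = integral {e..d/a} v - integral {e..c/a} v" by simp
  have "integral {e..g d} w + integral {g d..g c} w = integral {e..g c} w"
  proof (rule Henstock_Kurzweil_Integration.integral_combine)
    show "e \<le> g d" using gde by simp
    show "g d \<le> g c" by (rule gdc)
    show "w integrable_on {e..g c}" using w_aint[of e "g c"] pos gc1 set_lebesgue_integral_eq_integral(1) by simp
  qed
  then have S2: "integral {g d..g c} w = integral {e..g c} w - integral {e..g d} w" by simp
  show ?thesis using main J2 J3 S2 S3 unfolding g_def by simp
qed

end



lemma Ck_cont: "Ck k S f \<Longrightarrow> x \<in> S \<Longrightarrow> isCont f x"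
proof (induction k arbitrary: f)
  case 0 then show ?case by simp
next
  case (Suc k) then show ?case using Ck_Suc_imp by blast
qed

lemma Ck_cmult: "open S \<Longrightarrow> Ck k S f \<Longrightarrow> Ck k S (\<lambda>x. c * f x)"
  by (rule Ck_mult[OF _ Ck_const])

lemma Ck_diff: "open S \<Longrightarrow> Ck k S f \<Longrightarrow> Ck k S g \<Longrightarrow> Ck k S (\<lambda>x. f x - g x)"
proof -
  assume S: "open S" and f: "Ck k S f" and g: "Ck k S g"
  have "Ck k S (\<lambda>x. f x + (- 1) * g x)" using Ck_add[OF S f Ck_cmult[OF S g]] .
  moreover have eq: "\<forall>x\<in>S. f x + (- 1) * g x = f x - g x" by simp
  ultimately show ?thesis using Ck_cong[OF S eq] by blast
qed

lemma indef_Ck0: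
  assumes int: "\<And>b. e \<le> b \<Longrightarrow> b < 1 \<Longrightarrow> f integrable_on {e..b}"
  shows "Ck 0 {e<..<(1::real)} (\<lambda>x. integral {e..x} f)"
proof -
  have "isCont (\<lambda>x. integral {e..x} f) x" if x: "x \<in> {e<..<1}" for x
  proof -
    define b where "b = (x + 1) / 2"
    have b: "e \<le> b" "b < 1" "x < b" using x unfolding b_def by auto
    have "continuous_on {e..b} (\<lambda>x. integral {e..x} f)"
      using indefinite_integral_continuous_1[OF int[OF b(1,2)]] .
    moreover have "x \<in> interior {e..b}" using x b by simp
    ultimately show ?thesis using continuous_on_interior by blast
  qed
  then show ?thesis by simp
qed

lemma indef_CkSuc:
  assumes int: "\<And>b. e \<le> b \<Longrightarrow> b < 1 \<Longrightarrow> f integrable_on {e..b}"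
    and ck: "Ck k {e<..<(1::real)} f"
  shows "Ck (Suc k) {e<..<(1::real)} (\<lambda>x. integral {e..x} f)"
proof -
  have D: "((\<lambda>x. integral {e..x} f) has_field_derivative f x) (at x)" if x: "x \<in> {e<..<1}" for x
  proof -
    define b where "b = (x + 1) / 2"
    have b: "e \<le> b" "b < 1" "x < b" using x unfolding b_def by auto
    have "isCont f x" using Ck_cont[OF ck x] .
    then have "continuous (at x within {e..b} - {}) f" by (rule continuous_at_imp_continuous_within)
    moreover have "x \<in> {e..b} - {}" using x b by simp
    ultimately have "((\<lambda>u. integral {e..u} f) has_vector_derivative f x) (at x within {e..b} - {})"
      using integral_has_vector_derivative_continuous_at[OF int[OF b(1,2)]] by blast
    moreover have "x \<in> interior {e..b}" using x b by simp
    ultimately have "((\<lambda>u. integral {e..u} f) has_vector_derivative f x) (at x)"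
      using at_within_interior[of x "{e..b}"] by simp
    then show ?thesis using has_real_derivative_iff_has_vector_derivative by blast
  qed
  have d: "\<forall>x\<in>{e<..<1}. (\<lambda>x. integral {e..x} f) field_differentiable (at x)"
    using D field_differentiable_def by blast
  have eq: "\<forall>x\<in>{e<..<1}. f x = deriv (\<lambda>x. integral {e..x} f) x"
  proof
    fix x assume "x \<in> {e<..<1}"
    then show "f x = deriv (\<lambda>x. integral {e..x} f) x" by (rule sym[OF DERIV_imp_deriv[OF D]])
  qed
  have "Ck k {e<..<1} (deriv (\<lambda>x. integral {e..x} f))"
    by (rule Ck_cong[OF _ eq ck]) simp
  with d show ?thesis by simp
qed

context fei begin

lemma rep_Ck:
  assumes a0: "0 < a0" "a0 < 1"
    and W1: "Ck k {a0/8<..<1} (\<lambda>x. integral {a0/8..x} v)"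
    and W2: "Ck k {a0/8<..<1} (\<lambda>x. integral {a0/8..x} w)"
  shows "Ck k {3*a0/4<..<1} v"
proof -
  define c where "c = a0 / 4"
  define d where "d = a0 / 2"
  define e where "e = a0 / 8"
  define U where "U = {3*a0/4<..<(1::real)}"
  define E where "E = {e<..<(1::real)}"
  have oU: "open U" and oE: "open E" unfolding U_def E_def by auto
  have pos: "0 < e" "e < c" "c < d" "d < 1" "0 < d - c" using a0 unfolding c_def d_def e_def by auto
  have U0: "\<And>a. a \<in> U \<Longrightarrow> 3*a0/4 < a \<and> a < 1 \<and> 0 < a \<and> d < a" unfolding U_def d_def using a0 by auto
  have W1E: "Ck k E (\<lambda>x. integral {e..x} v)" using W1 unfolding E_def e_def .
  have W2E: "Ck k E (\<lambda>x. integral {e..x} w)" using W2 unfolding E_def e_def .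
  have id: "Ck k U (\<lambda>a. a)" by (rule Ck_id)
  have m1: "Ck k U (\<lambda>a. (a - c) / (1 - c))"
  proof -
    have "Ck k U (\<lambda>a. (1 / (1 - c)) * (a - c))" by (intro Ck_cmult Ck_diff oU id Ck_const)
    moreover have eq: "\<forall>a\<in>U. (1 / (1 - c)) * (a - c) = (a - c) / (1 - c)" by simp
    ultimately show ?thesis using Ck_cong[OF oU eq] by blast
  qed
  have m2: "Ck k U (\<lambda>a. (a - d) / (1 - d))"
  proof -
    have "Ck k U (\<lambda>a. (1 / (1 - d)) * (a - d))" by (intro Ck_cmult Ck_diff oU id Ck_const)
    moreover have eq: "\<forall>a\<in>U. (1 / (1 - d)) * (a - d) = (a - d) / (1 - d)" by simp
    ultimately show ?thesis using Ck_cong[OF oU eq] by blast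
  qed
  have inv: "Ck k U (\<lambda>a. a powr (- 1))"
    using Ck_subset[OF _ Ck_powr[of k "- 1"], of U] U0 by auto
  have m3: "Ck k U (\<lambda>a. d / a)"
  proof -
    have "Ck k U (\<lambda>a. d * a powr (- 1))" by (intro Ck_cmult oU inv)
    moreover have eq: "\<forall>a\<in>U. d * a powr (- 1) = d / a"
    proof
      fix a assume "a \<in> U"
      then have "0 < a" using U0 by blast
      then show "d * a powr (- 1) = d / a" by (simp add: powr_neg_one)
    qed
    ultimately show ?thesis using Ck_cong[OF oU eq] by blast
  qed
  have m4: "Ck k U (\<lambda>a. c / a)"
  proof -
    have "Ck k U (\<lambda>a. c * a powr (- 1))" by (intro Ck_cmult oU inv)
    moreover have eq: "\<forall>a\<in>U. c * a powr (- 1) = c / a"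
    proof
      fix a assume "a \<in> U"
      then have "0 < a" using U0 by blast
      then show "c * a powr (- 1) = c / a" by (simp add: powr_neg_one)
    qed
    ultimately show ?thesis using Ck_cong[OF oU eq] by blast
  qed
  have i1: "(\<lambda>a. (a - c) / (1 - c)) ` U \<subseteq> E"
  proof
    fix y assume "y \<in> (\<lambda>a. (a - c) / (1 - c)) ` U"
    then obtain a where a: "a \<in> U" "y = (a - c) / (1 - c)" by blast
    have "a - c \<le> (a - c) / (1 - c)" using pos U0[OF a(1)] by (simp add: le_divide_eq mult_left_le_one_le)
    moreover have "(a - c) / (1 - c) < 1" using pos U0[OF a(1)] by (simp add: divide_less_eq)
    moreover have "e < a - c" using U0[OF a(1)] a0 unfolding c_def e_def by simp
    ultimately show "y \<in> E" unfolding E_def a(2) by simp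
  qed
  have i2: "(\<lambda>a. (a - d) / (1 - d)) ` U \<subseteq> E"
  proof
    fix y assume "y \<in> (\<lambda>a. (a - d) / (1 - d)) ` U"
    then obtain a where a: "a \<in> U" "y = (a - d) / (1 - d)" by blast
    have "a - d \<le> (a - d) / (1 - d)" using pos U0[OF a(1)] by (simp add: le_divide_eq mult_left_le_one_le)
    moreover have "(a - d) / (1 - d) < 1" using pos U0[OF a(1)] by (simp add: divide_less_eq)
    moreover have "e < a - d" using U0[OF a(1)] a0 unfolding d_def e_def by simp
    ultimately show "y \<in> E" unfolding E_def a(2) by simp
  qed
  have i3: "(\<lambda>a. d / a) ` U \<subseteq> E"
  proof
    fix y assume "y \<in> (\<lambda>a. d / a) ` U"
    then obtain a where a: "a \<in> U" "y = d / a" by blast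
    have "d \<le> d / a" using pos U0[OF a(1)] by (simp add: le_divide_eq mult_left_le_one_le)
    moreover have "d / a < 1" using pos U0[OF a(1)] by (simp add: divide_less_eq)
    ultimately show "y \<in> E" unfolding E_def a(2) using pos by simp
  qed
  have i4: "(\<lambda>a. c / a) ` U \<subseteq> E"
  proof
    fix y assume "y \<in> (\<lambda>a. c / a) ` U"
    then obtain a where a: "a \<in> U" "y = c / a" by blast
    have "c \<le> c / a" using pos U0[OF a(1)] by (simp add: le_divide_eq mult_left_le_one_le)
    moreover have "c / a < 1" using pos U0[OF a(1)] by (simp add: divide_less_eq)
    ultimately show "y \<in> E" unfolding E_def a(2) using pos by simp
  qed
  have c1: "Ck k U (\<lambda>a. integral {e..(a - c) / (1 - c)} w)"
    using Ck_compose[OF oU oE i1 W2E m1] .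
  have c2: "Ck k U (\<lambda>a. integral {e..(a - d) / (1 - d)} w)"
    using Ck_compose[OF oU oE i2 W2E m2] .
  have c3: "Ck k U (\<lambda>a. integral {e..d / a} v)"
    using Ck_compose[OF oU oE i3 W1E m3] .
  have c4: "Ck k U (\<lambda>a. integral {e..c / a} v)"
    using Ck_compose[OF oU oE i4 W1E m4] .
  have P1: "Ck k U (\<lambda>a. (1 - a) powr (\<alpha> + 1))"
  proof (rule Ck_compose[OF oU _ _ Ck_powr])
    show "open {0::real<..}" by simp
    show "(\<lambda>a. 1 - a) ` U \<subseteq> {0<..}" using U0 by auto
    show "Ck k U (\<lambda>a. 1 - a)" by (intro Ck_diff oU Ck_const id)
  qed
  have P2: "Ck k U (\<lambda>a. a powr \<alpha>)"
    using Ck_subset[OF _ Ck_powr[of k \<alpha>], of U] U0 by auto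
  define R where "R a = (1 / (d - c)) * (integral {c..d} v
      + (1 - a) powr (\<alpha> + 1) * (integral {e..(a - c) / (1 - c)} w - integral {e..(a - d) / (1 - d)} w)
      - a powr \<alpha> * (a * (integral {e..d / a} v - integral {e..c / a} v)))" for a
  have CR: "Ck k U R"
    unfolding R_def
    by (intro Ck_cmult Ck_add Ck_diff Ck_mult oU Ck_const P1 P2 c1 c2 c3 c4 id)
  have eqR: "\<forall>a\<in>U. R a = v a"
  proof
    fix a assume a: "a \<in> U"
    have "(d - c) * v a = integral {c..d} v
      + (1 - a) powr (\<alpha> + 1) * (integral {e..(a - c) / (1 - c)} w - integral {e..(a - d) / (1 - d)} w)
      - a powr \<alpha> * (a * (integral {e..d / a} v - integral {e..c / a} v))"
      by (rule rep[OF a0]) (use U0[OF a] c_def d_def e_def in auto)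
    then show "R a = v a" unfolding R_def using pos by (simp add: field_simps)
  qed
  have "Ck k U v" by (rule Ck_cong[OF oU eqR CR])
  then show ?thesis unfolding U_def .
qed

lemma v_Ck: "Ck k {0<..<1} v"
proof -
  have step: "Ck k {0<..<1} v" if h: "\<And>a0. 0 < a0 \<Longrightarrow> a0 < 1 \<Longrightarrow>
      Ck k {a0/8<..<1} (\<lambda>x. integral {a0/8..x} v) \<and> Ck k {a0/8<..<1} (\<lambda>x. integral {a0/8..x} w)" for k
  proof (rule Ck_local)
    fix x :: real assume x: "x \<in> {0<..<1}"
    have x0: "0 < x" "x < 1" using x by auto
    have hh: "Ck k {x/8<..<1} (\<lambda>y. integral {x/8..y} v)" "Ck k {x/8<..<1} (\<lambda>y. integral {x/8..y} w)"
      using h[OF x0] by auto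
    have "Ck k {3*x/4<..<1} v" by (rule rep_Ck[OF x0 hh])
    moreover have "x \<in> {3*x/4<..<1}" using x by auto
    moreover have "open {3*x/4<..<(1::real)}" by simp
    ultimately show "\<exists>T. open T \<and> x \<in> T \<and> Ck k T v" by (intro exI[of _ "{3*x/4<..<1}"]) simp
  qed
  show ?thesis
  proof (induction k)
    case 0
    show ?case
    proof (rule step)
      fix a0 :: real assume a0: "0 < a0" "a0 < 1"
      have iv: "v integrable_on {a0/8..b}" if "a0/8 \<le> b" "b < 1" for b
        using set_lebesgue_integral_eq_integral(1)[OF v_aint[of "a0/8" b]] that a0 by simp
      have iw: "w integrable_on {a0/8..b}" if "a0/8 \<le> b" "b < 1" for b
        using set_lebesgue_integral_eq_integral(1)[OF w_aint[of "a0/8" b]] that a0 by simp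
      show "Ck 0 {a0/8<..<1} (\<lambda>x. integral {a0/8..x} v) \<and> Ck 0 {a0/8<..<1} (\<lambda>x. integral {a0/8..x} w)"
        by (rule conjI[OF indef_Ck0[OF iv] indef_Ck0[OF iw]])
    qed
  next
    case (Suc k)
    show ?case
    proof (rule step)
      fix a0 :: real assume a0: "0 < a0" "a0 < 1"
      define E where "E = {a0/8<..<(1::real)}"
      have oE: "open E" unfolding E_def by simp
      have "E \<subseteq> {0<..<1}" unfolding E_def using a0 by auto
      then have vE: "Ck k E v" by (rule Ck_subset[OF _ Suc.IH])
      have pE: "Ck k E (\<lambda>t. (1 - t) powr (- \<alpha> - 2))"
      proof (rule Ck_compose[OF oE _ _ Ck_powr])
        show "open {0::real<..}" by simp
        show "(\<lambda>a. 1 - a) ` E \<subseteq> {0<..}" unfolding E_def by auto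
        show "Ck k E (\<lambda>a. 1 - a)" by (intro Ck_diff oE Ck_const Ck_id)
      qed
      have "Ck k E (\<lambda>t. v t * (1 - t) powr (- \<alpha> - 2))" by (rule Ck_mult[OF oE vE pE])
      moreover have "(\<lambda>t. v t * (1 - t) powr (- \<alpha> - 2)) = w" by (rule ext) (simp add: w_def)
      ultimately have wE: "Ck k E w" by simp
      have iv: "v integrable_on {a0/8..b}" if "a0/8 \<le> b" "b < 1" for b
        using set_lebesgue_integral_eq_integral(1)[OF v_aint[of "a0/8" b]] that a0 by simp
      have iw: "w integrable_on {a0/8..b}" if "a0/8 \<le> b" "b < 1" for b
        using set_lebesgue_integral_eq_integral(1)[OF w_aint[of "a0/8" b]] that a0 by simp
      show "Ck (Suc k) {a0/8<..<1} (\<lambda>x. integral {a0/8..x} v) \<and> Ck (Suc k) {a0/8<..<1} (\<lambda>x. integral {a0/8..x} w)"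
        by (rule conjI[OF indef_CkSuc[OF iv vE[unfolded E_def]] indef_CkSuc[OF iw wE[unfolded E_def]]])
    qed
  qed
qed

end

theorem propositionC1:
  fixes u :: "real \<Rightarrow> real" and \<alpha> :: real
  assumes "\<alpha> > 0"
    and "u \<in> borel_measurable (restrict_space lborel {0..1})"
    and "u 0 = 0" and "u 1 = 0"
    and "\<And>x y. 0 \<le> x \<Longrightarrow> x < 1 \<Longrightarrow> 0 \<le> y \<Longrightarrow> y < 1 \<Longrightarrow> x + y \<le> 1 \<Longrightarrow>
           u (1 - x) + (1 - x) powr \<alpha> * u (y / (1 - x))
         = u y + (1 - y) powr \<alpha> * u ((1 - x - y) / (1 - y))"
  shows "\<forall>k::nat. \<forall>x\<in>{0<..<1}. (deriv ^^ k) u differentiable (at x)"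
proof -
  define v where "v x = indicat_real {0..1} x *\<^sub>R u x" for x
  have vm: "v \<in> borel_measurable borel"
  proof -
    have "(\<lambda>x. indicat_real {0..1} x *\<^sub>R u x) \<in> borel_measurable lborel"
      using assms(2) borel_measurable_restrict_space_iff[of "{0..1}" lborel u] by simp
    then show ?thesis unfolding v_def[abs_def] by simp
  qed
  have vu: "v x = u x" if "x \<in> {0..1}" for x using that unfolding v_def by simp
  interpret fei v \<alpha>
  proof
    show "\<alpha> > 0" by (rule assms(1))
    show "v \<in> borel_measurable borel" by (rule vm)
    fix a s :: real
    assume h: "0 < a" "a \<le> 1" "0 \<le> s" "s \<le> a" "s < 1"
    have e: "u (1 - (1 - a)) + (1 - (1 - a)) powr \<alpha> * u (s / (1 - (1 - a)))
         = u s + (1 - s) powr \<alpha> * u ((1 - (1 - a) - s) / (1 - s))"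
      using assms(5)[of "1 - a" s] h by auto
    have m1: "s / a \<in> {0..1}" using h by (auto simp: divide_le_eq)
    have m2: "(a - s) / (1 - s) \<in> {0..1}" using h by (auto simp: divide_le_eq)
    show "v a + a powr \<alpha> * v (s / a) = v s + (1 - s) powr \<alpha> * v ((a - s) / (1 - s))"
      using e vu[of a] vu[of s] vu[OF m1] vu[OF m2] h by simp
  qed
  have "Ck k {0<..<1} u" for k
  proof (rule Ck_cong[OF _ _ v_Ck[of k]])
    show "\<forall>x\<in>{0<..<1}. v x = u x" using vu by auto
  qed simp
  then show ?thesis using Ck_final by blast
qed


end
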